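(* Let $A$ be an $F_n$-good $n\times n$ matrix. If $A_{1,1}=1$, then $A_i=\vec{e}_i$ for all $2\leq i\leq n-1$. If $A_{1,n}=1$, then $A_i=\vec{e}_{n-i+1}$ for all $2\leq i\leq n-1$.
   Context: $F_n$ is the set of vectors $\vec{x}=(x_1,\ldots,x_n)\in\mathbb{Z}_2^n$ with no $i$ such that $x_i=x_{i+1}=1$. An $n\times n$ matrix $A$ over $\mathbb{Z}_2$ is $F_n$-good if it is invertible and $A\vec{x}\in F_n$ for all $\vec{x}\in F_n$. $A_i$ denotes the $i$-th row of $A$, $A_{i,j}$ its $(i,j)$ entry, and $\vec{e}_j$ the $j$-th standard basis vector (written as a row). *)

theory Defs
  imports "Jordan_Normal_Form.Matrix" "HOL-Library.Z2"
begin

text \<open>Indices are 0-based: paper's x_1..x_n are x $ 0 .. x $ (n-1).\<close>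

definition F_set :: "nat \<Rightarrow> bit vec set" where
  "F_set n = {x \<in> carrier_vec n. \<not> (\<exists>i. i + 1 < n \<and> x $ i = 1 \<and> x $ (i + 1) = 1)}"

definition F_good :: "nat \<Rightarrow> bit mat \<Rightarrow> bool" where
  "F_good n A \<longleftrightarrow> A \<in> carrier_mat n n \<and> invertible_mat A \<and>
     (\<forall>x \<in> F_set n. A *\<^sub>v x \<in> F_set n)"

end

theory Submission
  imports Defs
begin

lemma core:
  fixes T :: "nat \<Rightarrow> nat set" and n :: nat
  assumes ne: "\<forall>i<n. T i \<noteq> {}"
    and dist: "\<forall>i<n. \<forall>j<n. i \<noteq> j \<longrightarrow> T i \<noteq> T j"
    and Q: "\<forall>i. i+1<n \<longrightarrow> (\<forall>a\<in>T i. \<forall>b\<in>T (i+1). a+1=b \<or> b+1=a)"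
    and z: "0 \<in> T 0"
  shows "\<forall>i. 1 \<le> i \<and> i \<le> n-2 \<longrightarrow> T i = {i}"
proof -
  have "1 \<le> i \<longrightarrow> i \<le> n-2 \<longrightarrow> T i = {i}" for i
  proof (induction i rule: less_induct)
    case (less i)
    show ?case
    proof (intro impI)
      assume i1: "1 \<le> i" and i2: "i \<le> n - 2"
      show "T i = {i}"
      proof (cases "i = 1")
        case True
        have "1 < n" using i2 True by linarith
        then have "\<forall>b\<in>T 1. b = 1" using Q[rule_format, of 0 0] z by auto
        moreover have "T 1 \<noteq> {}" using ne i2 True by auto
        ultimately show ?thesis using True by auto
      next
        case False
        then obtain m where m: "i = Suc m" "m \<ge> 1" using i1
          by (metis One_nat_def Suc_le_D le_SucE not_less_eq_eq)
        have mn: "m+2 < n" "m+1 < n" "m < n" using m i2 by linarith+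
        have Tm: "T m = {m}" using less.IH[of m] m i2 by auto
        have nb: "\<forall>b\<in>T (m+1). b = m+1 \<or> b+1 = m"
          using Q[rule_format, of m m] Tm mn by auto
        have neq: "T (m+1) \<noteq> {}" using ne m i2 by auto
        have in1: "m+1 \<in> T (m+1)"
        proof (rule ccontr)
          assume nin: "m+1 \<notin> T (m+1)"
          have Tmm: "T (m+1) = {m-1}"
          proof -
            have "\<forall>b\<in>T (m+1). b = m-1" using nb nin by force
            then show ?thesis using neq by auto
          qed
          show False
          proof (cases "m = 1")
            case True
            have T2: "T 2 = {0}" using Tmm True by (simp add: numeral_2_eq_2)
            have T1: "T 1 = {1}" using Tm True by simp
            have "3 < n" using mn True by simp
            then have "\<forall>c\<in>T 3. c = 1" using Q[rule_format, of 2] T2 by auto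
            moreover have "T 3 \<noteq> {}" using ne \<open>3<n\<close> by auto
            ultimately have "T 3 = {1}" by auto
            then show False using dist T1 \<open>3<n\<close> by (metis One_nat_def less_trans numeral_3_eq_3 lessI less_numeral_extra(4) less_Suc_eq)
          next
            case False
            have "T (m-1) = {m-1}" using less.IH[of "m-1"] m False i2 by auto
            moreover have "m-1 < n" "m-1 \<noteq> m+1" using mn by auto
            ultimately show False using dist Tmm mn by metis
          qed
        qed
        have nin2: "m-1 \<notin> T (m+1)"
        proof
          assume im: "m-1 \<in> T (m+1)"
          have "\<forall>c\<in>T (m+2). c = m"
          proof
            fix c assume c: "c \<in> T (m+2)"
            have "m+1+1 < n" using m i2 by auto
            then have "(m-1)+1 = c \<or> c+1 = m-1" "(m+1)+1 = c \<or> c+1 = m+1"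
              using Q[rule_format, of "m+1"] im in1 c by (auto simp: add.assoc)
            then show "c = m" using m by auto
          qed
          moreover have "T (m+2) \<noteq> {}" using ne m i2 by auto
          ultimately have "T (m+2) = {m}" by auto
          moreover have "m \<noteq> m+2" by simp
          ultimately show False using dist Tm mn by metis
        qed
        have "T (m+1) = {m+1}" using nb in1 nin2 by force
        then show ?thesis using m by simp
      qed
    qed
  qed
  then show ?thesis by blast
qed


lemma chi_mult:
  fixes A :: "bit mat"
  assumes A: "A \<in> carrier_mat n n" and i: "i < n" and X: "X \<subseteq> {..<n}"
  shows "(A *\<^sub>v vec n (\<lambda>l. if l \<in> X then 1 else 0)) $ i = (\<Sum>l\<in>X. A $$ (i,l))"
proof -
  have "(A *\<^sub>v vec n (\<lambda>l. if l \<in> X then 1 else 0)) $ i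
      = (\<Sum>l\<in>{0..<n}. if l \<in> X then A $$ (i,l) else 0)"
  proof -
    have "(A *\<^sub>v vec n (\<lambda>l. if l \<in> X then 1 else 0)) $ i = row A i \<bullet> vec n (\<lambda>l. if l \<in> X then 1 else 0)"
      using A i by simp
    also have "\<dots> = (\<Sum>l\<in>{0..<n}. if l \<in> X then A $$ (i,l) else 0)"
      unfolding scalar_prod_def by (rule sum.cong) (use A i in auto)
    finally show ?thesis .
  qed
  also have "\<dots> = (\<Sum>l\<in>{0..<n} \<inter> X. A $$ (i,l))"
    by (simp add: sum.inter_restrict)
  also have "{0..<n} \<inter> X = X" using X by auto
  finally show ?thesis .
qed

lemma chi_F:
  assumes X: "X \<subseteq> {..<n}" and na: "\<forall>l. \<not> (l \<in> X \<and> l+1 \<in> X)"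
  shows "vec n (\<lambda>l. if l \<in> X then (1::bit) else 0) \<in> F_set n"
  using na unfolding F_set_def by auto

lemma pair:
  fixes A :: "bit mat"
  assumes G: "F_good n A" and i: "i+1 < n" and j: "j < n" and k: "k < n"
    and a1: "A $$ (i,j) = 1" and a2: "A $$ (i+1,k) = 1"
  shows "j+1 = k \<or> k+1 = j"
proof -
  have A: "A \<in> carrier_mat n n" and im: "\<forall>x \<in> F_set n. A *\<^sub>v x \<in> F_set n"
    using G unfolding F_good_def by auto
  have key: "\<not> ((\<Sum>l\<in>X. A $$ (i,l)) = 1 \<and> (\<Sum>l\<in>X. A $$ (i+1,l)) = 1)"
    if X: "X \<subseteq> {..<n}" and na: "\<forall>l. \<not> (l \<in> X \<and> l+1 \<in> X)" for X
  proof -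
    have "A *\<^sub>v vec n (\<lambda>l. if l \<in> X then 1 else 0) \<in> F_set n"
      using im chi_F[OF X na] by blast
    then have "\<not> ((A *\<^sub>v vec n (\<lambda>l. if l \<in> X then 1 else 0)) $ i = 1 \<and>
                 (A *\<^sub>v vec n (\<lambda>l. if l \<in> X then 1 else 0)) $ (i+1) = 1)"
      using i unfolding F_set_def by blast
    then show ?thesis using chi_mult[OF A _ X, of i] chi_mult[OF A _ X, of "i+1"] i by simp
  qed
  have s1: "A $$ (i+1,j) = 0"
  proof (rule ccontr)
    assume "A $$ (i+1,j) \<noteq> 0"
    then have "A $$ (i+1,j) = 1" by simp
    then show False using key[of "{j}"] j a1 by auto
  qed
  have s2: "A $$ (i,k) = 0"
  proof (rule ccontr)
    assume "A $$ (i,k) \<noteq> 0"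
    then have "A $$ (i,k) = 1" by simp
    then show False using key[of "{k}"] k a2 by auto
  qed
  have jk: "j \<noteq> k" using s1 a2 by auto
  show ?thesis
  proof (rule ccontr)
    assume nad: "\<not> (j+1 = k \<or> k+1 = j)"
    have "\<forall>l. \<not> (l \<in> {j,k} \<and> l+1 \<in> {j,k})" using nad by auto
    then show False using key[of "{j,k}"] j k jk a1 a2 s1 s2 by auto
  qed
qed

lemma inv_facts:
  fixes A :: "bit mat"
  assumes G: "F_good n A"
  shows "\<And>i. i < n \<Longrightarrow> \<exists>l<n. A $$ (i,l) = 1"
    and "\<And>i j. i < n \<Longrightarrow> j < n \<Longrightarrow> i \<noteq> j \<Longrightarrow> \<exists>l<n. A $$ (i,l) \<noteq> A $$ (j,l)"
proof -
  have A: "A \<in> carrier_mat n n" and inv: "invertible_mat A"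
    using G unfolding F_good_def by auto
  obtain B where AB: "A * B = 1\<^sub>m n" and BA: "B * A = 1\<^sub>m (dim_row B)"
    using inv A unfolding invertible_mat_def inverts_mat_def by auto
  have dB: "dim_col B = n"
    using AB by (metis index_mult_mat(3) index_one_mat(3))
  have dBr: "dim_row B = n"
    using BA A by (metis index_mult_mat(3) index_one_mat(3) carrier_matD(2))
  {
    fix i assume i: "i < n"
    show "\<exists>l<n. A $$ (i,l) = 1"
    proof (rule ccontr)
      assume "\<not> (\<exists>l<n. A $$ (i,l) = 1)"
      then have z: "\<forall>l<n. A $$ (i,l) = 0" by auto
      have "(A * B) $$ (i,i) = row A i \<bullet> col B i" using A i dB by simp
      also have "\<dots> = 0" unfolding scalar_prod_def
        by (rule sum.neutral) (use A i z dBr in auto)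
      finally show False using AB i by simp
    qed
  }
  {
    fix i j assume i: "i < n" and j: "j < n" and ij: "i \<noteq> j"
    show "\<exists>l<n. A $$ (i,l) \<noteq> A $$ (j,l)"
    proof (rule ccontr)
      assume "\<not> (\<exists>l<n. A $$ (i,l) \<noteq> A $$ (j,l))"
      then have "row A i = row A j" using A i j by (auto intro!: eq_vecI)
      then have "(A * B) $$ (i,j) = (A * B) $$ (j,j)" using A i j dB by simp
      then show False using AB i j ij by simp
    qed
  }
qed

theorem corollary2:
  fixes n :: nat and A :: "bit mat"
  assumes "F_good n A"
  shows "(A $$ (0, 0) = 1 \<longrightarrow> (\<forall>i. 1 \<le> i \<and> i \<le> n - 2 \<longrightarrow> row A i = unit_vec n i))
       \<and> (A $$ (0, n - 1) = 1 \<longrightarrow> (\<forall>i. 1 \<le> i \<and> i \<le> n - 2 \<longrightarrow> row A i = unit_vec n (n - 1 - i)))"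
proof (cases "n \<ge> 3")
  case False
  then show ?thesis by auto
next
  case n3: True
  have A: "A \<in> carrier_mat n n" using assms unfolding F_good_def by auto
  note nz = inv_facts(1)[OF assms] and df = inv_facts(2)[OF assms]
  have P1: "row A i = unit_vec n i" if a00: "A $$ (0,0) = 1" and i: "1 \<le> i" "i \<le> n - 2" for i
  proof -
    define S where "S = (\<lambda>i. {l. l < n \<and> A $$ (i,l) = 1})"
    have "\<forall>i. 1 \<le> i \<and> i \<le> n-2 \<longrightarrow> S i = {i}"
    proof (rule core)
      show "\<forall>i<n. S i \<noteq> {}" using nz unfolding S_def by blast
      show "\<forall>i<n. \<forall>j<n. i \<noteq> j \<longrightarrow> S i \<noteq> S j"
      proof (intro allI impI)
        fix i j assume "i < n" "j < n" "i \<noteq> j"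
        then obtain l where l: "l < n" "A $$ (i,l) \<noteq> A $$ (j,l)" using df by blast
        then have "(l \<in> S i) \<noteq> (l \<in> S j)" unfolding S_def by auto
        then show "S i \<noteq> S j" by blast
      qed
      show "\<forall>i. i+1<n \<longrightarrow> (\<forall>a\<in>S i. \<forall>b\<in>S (i+1). a+1=b \<or> b+1=a)"
        using pair[OF assms] unfolding S_def by blast
      show "0 \<in> S 0" using a00 n3 unfolding S_def by auto
    qed
    then have Si: "S i = {i}" using i by blast
    show ?thesis
    proof (rule eq_vecI)
      fix l assume "l < dim_vec (unit_vec n i)"
      then have l: "l < n" by simp
      have "A $$ (i,l) = 1 \<longleftrightarrow> l = i" using Si l unfolding S_def by auto
      then show "row A i $ l = unit_vec n i $ l" using A l i by (cases "A $$ (i,l)") auto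
    next
      show "dim_vec (row A i) = dim_vec (unit_vec n i)" using A by simp
    qed
  qed
  have P2: "row A i = unit_vec n (n-1-i)" if a0: "A $$ (0,n-1) = 1" and i: "1 \<le> i" "i \<le> n - 2" for i
  proof -
    define S where "S = (\<lambda>i. {a. a < n \<and> A $$ (i,n-1-a) = 1})"
    have "\<forall>i. 1 \<le> i \<and> i \<le> n-2 \<longrightarrow> S i = {i}"
    proof (rule core)
      show "\<forall>i<n. S i \<noteq> {}"
      proof (intro allI impI)
        fix i assume "i < n"
        then obtain l where l: "l < n" "A $$ (i,l) = 1" using nz by blast
        then have "n-1-l \<in> S i" unfolding S_def by auto
        then show "S i \<noteq> {}" by blast
      qed
      show "\<forall>i<n. \<forall>j<n. i \<noteq> j \<longrightarrow> S i \<noteq> S j"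
      proof (intro allI impI)
        fix i j assume "i < n" "j < n" "i \<noteq> j"
        then obtain l where l: "l < n" "A $$ (i,l) \<noteq> A $$ (j,l)" using df by blast
        have e: "n-1-(n-1-l) = l" using l by auto
        have "(n-1-l \<in> S i) \<noteq> (n-1-l \<in> S j)" using l e unfolding S_def by auto
        then show "S i \<noteq> S j" by blast
      qed
      show "\<forall>i. i+1<n \<longrightarrow> (\<forall>a\<in>S i. \<forall>b\<in>S (i+1). a+1=b \<or> b+1=a)"
      proof (intro allI impI ballI)
        fix i a b assume i: "i+1 < n" and a: "a \<in> S i" and b: "b \<in> S (i+1)"
        have "(n-1-a)+1 = n-1-b \<or> (n-1-b)+1 = n-1-a"
          using pair[OF assms i, of "n-1-a" "n-1-b"] a b n3 unfolding S_def by auto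
        then show "a+1=b \<or> b+1=a" using a b unfolding S_def by auto
      qed
      show "0 \<in> S 0" using a0 n3 unfolding S_def by auto
    qed
    then have Si: "S i = {i}" using i by blast
    show ?thesis
    proof (rule eq_vecI)
      fix l assume "l < dim_vec (unit_vec n (n-1-i))"
      then have l: "l < n" by simp
      have e: "n-1-(n-1-l) = l" using l by auto
      have "A $$ (i,l) = 1 \<longleftrightarrow> n-1-l = i"
      proof -
        have "n-1-l < n" using l by auto
        then have "n-1-l \<in> S i \<longleftrightarrow> A $$ (i,l) = 1" using e unfolding S_def by auto
        then show ?thesis using Si by auto
      qed
      moreover have "n-1-l = i \<longleftrightarrow> l = n-1-i" using l i by auto
      ultimately show "row A i $ l = unit_vec n (n-1-i) $ l" using A l i by (cases "A $$ (i,l)") auto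
    next
      show "dim_vec (row A i) = dim_vec (unit_vec n (n-1-i))" using A by simp
    qed
  qed
  show ?thesis using P1 P2 by blast
qed

end
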